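(* There is a non-separable closed subspace of $BV[0,1]$ contained in $\mathcal{F}\cup\{0\}$.
   Context: $BV[0,1]$ is the Banach space of real-valued, left-continuous functions of bounded variation on $[0,1]$ with norm $\|f\|=|f(0)|+V(f)$, where $V(f)$ is the total variation of $f$ on $[0,1]$. $\mathcal{F}$ is the set of functions of bounded variation on $[0,1]$ whose set of jump discontinuities is dense in $[0,1]$. *)

theory Defs
  imports "HOL-Analysis.Analysis"
begin

text \<open>Functions on [0,1] are represented as real => real functions that vanish outside [0,1]
  (canonical representatives), so that equality of elements of BV[0,1] is equality of functions.\<close>

definition var01_sums :: "(real \<Rightarrow> real) \<Rightarrow> real set" where
  "var01_sums f = {(\<Sum>i<length xs - 1. \<bar>f (xs ! Suc i) - f (xs ! i)\<bar>) | xs.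
                     sorted xs \<and> set xs \<subseteq> {0..1}}"

definition bounded_var01 :: "(real \<Rightarrow> real) \<Rightarrow> bool" where
  "bounded_var01 f \<longleftrightarrow> bdd_above (var01_sums f)"

definition TV01 :: "(real \<Rightarrow> real) \<Rightarrow> real" where
  "TV01 f = Sup (var01_sums f)"

definition BV01 :: "(real \<Rightarrow> real) set" where
  "BV01 = {f. bounded_var01 f \<and> (\<forall>x\<in>{0<..1}. (f \<longlongrightarrow> f x) (at_left x))
              \<and> (\<forall>x. x \<notin> {0..1} \<longrightarrow> f x = 0)}"

definition bv_norm :: "(real \<Rightarrow> real) \<Rightarrow> real" where
  "bv_norm f = \<bar>f 0\<bar> + TV01 f"

definition jump_points :: "(real \<Rightarrow> real) \<Rightarrow> real set" where
  "jump_points f = {x\<in>{0..1}. \<not> continuous (at x within {0..1}) f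
       \<and> (0 < x \<longrightarrow> (\<exists>l. (f \<longlongrightarrow> l) (at_left x)))
       \<and> (x < 1 \<longrightarrow> (\<exists>l. (f \<longlongrightarrow> l) (at_right x)))}"

definition Fcal :: "(real \<Rightarrow> real) set" where
  "Fcal = {f. bounded_var01 f \<and> {0..1} \<subseteq> closure (jump_points f)}"

definition bv_linear_subspace :: "(real \<Rightarrow> real) set \<Rightarrow> bool" where
  "bv_linear_subspace S \<longleftrightarrow> S \<subseteq> BV01 \<and> (\<lambda>_. 0) \<in> S
     \<and> (\<forall>f\<in>S. \<forall>g\<in>S. (\<lambda>x. f x + g x) \<in> S) \<and> (\<forall>c::real. \<forall>f\<in>S. (\<lambda>x. c * f x) \<in> S)"

definition bv_closed :: "(real \<Rightarrow> real) set \<Rightarrow> bool" where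
  "bv_closed S \<longleftrightarrow> (\<forall>g f. (\<forall>n. g n \<in> S) \<and> f \<in> BV01
       \<and> (\<lambda>n. bv_norm (\<lambda>x. g n x - f x)) \<longlonglongrightarrow> 0 \<longrightarrow> f \<in> S)"

definition bv_separable :: "(real \<Rightarrow> real) set \<Rightarrow> bool" where
  "bv_separable S \<longleftrightarrow> (\<exists>D. countable D \<and> D \<subseteq> S
       \<and> (\<forall>f\<in>S. \<forall>e>0. \<exists>d\<in>D. bv_norm (\<lambda>x. f x - d x) < e))"

end

theory Submission
  imports Defs
begin


fun vs :: "(real \<Rightarrow> real) \<Rightarrow> real list \<Rightarrow> real" where
  "vs F (x # y # zs) = \<bar>F y - F x\<bar> + vs F (y # zs)"
| "vs F _ = 0"

lemma vs_eq: "(\<Sum>i<length xs - 1. \<bar>F (xs ! Suc i) - F (xs ! i)\<bar>) = vs F xs"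
proof (induction F xs rule: vs.induct)
  case (1 F x y zs)
  have "(\<Sum>i<length (x # y # zs) - 1. \<bar>F ((x # y # zs) ! Suc i) - F ((x # y # zs) ! i)\<bar>)
     = (\<Sum>i<Suc (length zs). \<bar>F ((x # y # zs) ! Suc i) - F ((x # y # zs) ! i)\<bar>)" by simp
  also have "\<dots> = \<bar>F y - F x\<bar> + (\<Sum>i<length zs. \<bar>F ((y # zs) ! Suc i) - F ((y # zs) ! i)\<bar>)"
    by (subst sum.lessThan_Suc_shift) simp
  also have "\<dots> = \<bar>F y - F x\<bar> + vs F (y # zs)" using 1 by simp
  finally show ?case by simp
qed auto

lemma var01_sums_vs: "var01_sums F = {vs F xs | xs. sorted xs \<and> set xs \<subseteq> {0..1}}"
  unfolding var01_sums_def vs_eq ..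

lemma vs_nonneg: "vs F xs \<ge> 0"
  by (induction F xs rule: vs.induct) auto

lemma vs_snoc: "vs F (xs @ [a]) = vs F xs + (if xs = [] then 0 else \<bar>F a - F (last xs)\<bar>)"
  by (induction F xs rule: vs.induct) auto

lemma vs_add_le: "vs (\<lambda>x. F x + G x) xs \<le> vs F xs + vs G xs"
  by (induction F xs rule: vs.induct) (auto simp: abs_triangle_ineq add_mono
     intro: order_trans[OF _ add_mono[OF abs_triangle_ineq order_refl]])

lemma vs_scale: "vs (\<lambda>x. c * F x) xs = \<bar>c\<bar> * vs F xs"
  by (induction F xs rule: vs.induct) (auto simp: abs_mult right_diff_distrib[symmetric] distrib_left)

lemma vs_le_TV:
  assumes "bounded_var01 F" "sorted xs" "set xs \<subseteq> {0..1}"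
  shows "vs F xs \<le> TV01 F"
  unfolding TV01_def
  by (rule cSup_upper) (use assms in \<open>auto simp: bounded_var01_def var01_sums_vs\<close>)

lemma TV_le:
  assumes "\<And>xs. sorted xs \<Longrightarrow> set xs \<subseteq> {0..1} \<Longrightarrow> vs F xs \<le> B"
  shows "TV01 F \<le> B"
  unfolding TV01_def var01_sums_vs
  by (rule cSup_least) (auto intro!: assms exI[of _ "[]"])

lemma bv_intro:
  assumes "\<And>xs. sorted xs \<Longrightarrow> set xs \<subseteq> {0..1} \<Longrightarrow> vs F xs \<le> B"
  shows "bounded_var01 F"
  unfolding bounded_var01_def var01_sums_vs bdd_above_def using assms by blast

lemma TV_nonneg: "bounded_var01 F \<Longrightarrow> TV01 F \<ge> 0"
  using vs_le_TV[of F "[]"] by simp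

lemma diff_le_TV:
  assumes "bounded_var01 F" "x \<in> {0..1}" "y \<in> {0..1}"
  shows "\<bar>F y - F x\<bar> \<le> TV01 F"
proof (cases "x \<le> y")
  case True
  then show ?thesis using vs_le_TV[OF assms(1), of "[x,y]"] assms by auto
next
  case False
  then show ?thesis using vs_le_TV[OF assms(1), of "[y,x]"] assms by (auto simp: abs_minus_commute)
qed

lemma val_le_norm:
  assumes "bounded_var01 F" "x \<in> {0..1}"
  shows "\<bar>F x\<bar> \<le> bv_norm F"
  using diff_le_TV[OF assms(1) _ assms(2), of 0] unfolding bv_norm_def by auto

lemma bv_add: assumes "bounded_var01 F" "bounded_var01 G"
  shows "bounded_var01 (\<lambda>x. F x + G x)" "TV01 (\<lambda>x. F x + G x) \<le> TV01 F + TV01 G"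
proof -
  have *: "vs (\<lambda>x. F x + G x) xs \<le> TV01 F + TV01 G" if "sorted xs" "set xs \<subseteq> {0..1}" for xs
    using vs_add_le[of F G xs] vs_le_TV[OF assms(1) that] vs_le_TV[OF assms(2) that] by linarith
  show "bounded_var01 (\<lambda>x. F x + G x)" by (rule bv_intro[OF *])
  show "TV01 (\<lambda>x. F x + G x) \<le> TV01 F + TV01 G" by (rule TV_le[OF *])
qed

lemma bv_scale: assumes "bounded_var01 F"
  shows "bounded_var01 (\<lambda>x. c * F x)" "TV01 (\<lambda>x. c * F x) \<le> \<bar>c\<bar> * TV01 F"
proof -
  have *: "vs (\<lambda>x. c * F x) xs \<le> \<bar>c\<bar> * TV01 F" if "sorted xs" "set xs \<subseteq> {0..1}" for xs
    using vs_le_TV[OF assms(1) that] by (simp add: vs_scale mult_left_mono)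
  show "bounded_var01 (\<lambda>x. c * F x)" by (rule bv_intro[OF *])
  show "TV01 (\<lambda>x. c * F x) \<le> \<bar>c\<bar> * TV01 F" by (rule TV_le[OF *])
qed

lemma bv_diff: assumes "bounded_var01 F" "bounded_var01 G"
  shows "bounded_var01 (\<lambda>x. F x - G x)"
  using bv_add(1)[OF assms(1) bv_scale(1)[OF assms(2), of "-1"]] by simp

lemma norm_add: assumes "bounded_var01 F" "bounded_var01 G"
  shows "bv_norm (\<lambda>x. F x + G x) \<le> bv_norm F + bv_norm G"
  using bv_add(2)[OF assms] abs_triangle_ineq[of "F 0" "G 0"] unfolding bv_norm_def by linarith

lemma norm_scale: assumes "bounded_var01 F"
  shows "bv_norm (\<lambda>x. c * F x) \<le> \<bar>c\<bar> * bv_norm F"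
  using bv_scale(2)[OF assms, of c] unfolding bv_norm_def by (simp add: abs_mult distrib_left)

lemma norm_nonneg: "bounded_var01 F \<Longrightarrow> bv_norm F \<ge> 0"
  using TV_nonneg[of F] unfolding bv_norm_def by linarith

lemma norm_tri: assumes "bounded_var01 A" "bounded_var01 B" "bounded_var01 C"
  shows "bv_norm (\<lambda>x. A x - C x) \<le> bv_norm (\<lambda>x. A x - B x) + bv_norm (\<lambda>x. B x - C x)"
  using norm_add[OF bv_diff[OF assms(1,2)] bv_diff[OF assms(2,3)]] by simp

lemma norm_sym: assumes "bounded_var01 A" "bounded_var01 B"
  shows "bv_norm (\<lambda>x. A x - B x) = bv_norm (\<lambda>x. B x - A x)"
proof -
  have "bv_norm (\<lambda>x. A x - B x) \<le> bv_norm (\<lambda>x. B x - A x)"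
    if "bounded_var01 A" "bounded_var01 B" for A B
    using norm_scale[OF bv_diff[OF that(2,1)], of "-1"] by simp
  then show ?thesis using assms by (meson order_antisym)
qed

lemma bv_zero: "bounded_var01 (\<lambda>x. 0)" "TV01 (\<lambda>x. 0) = 0" "bv_norm (\<lambda>x. 0) = 0"
proof -
  have *: "vs (\<lambda>x. 0) xs = 0" for xs by (induction "\<lambda>x::real. 0::real" xs rule: vs.induct) auto
  show "bounded_var01 (\<lambda>x. 0)" by (rule bv_intro[of _ 0]) (simp add: *)
  then show "TV01 (\<lambda>x. 0) = 0" using TV_nonneg TV_le[of "\<lambda>x. 0" 0] by (simp add: * order_antisym)
  then show "bv_norm (\<lambda>x. 0) = 0" by (simp add: bv_norm_def)
qed



lemma mono_right_lim:
  fixes \<phi> :: "real \<Rightarrow> real"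
  assumes mono: "\<And>x y. 0 \<le> x \<Longrightarrow> x \<le> y \<Longrightarrow> y \<le> 1 \<Longrightarrow> \<phi> x \<le> \<phi> y"
    and p: "0 \<le> p" "p < 1"
  shows "\<exists>L. (\<phi> \<longlongrightarrow> L) (at_right p)"
proof -
  define L where "L = Inf (\<phi> ` {p<..1})"
  have ne: "\<phi> ` {p<..1} \<noteq> {}" using p by auto
  have bdd: "bdd_below (\<phi> ` {p<..1})"
    by (rule bdd_belowI[of _ "\<phi> p"]) (use p in \<open>auto intro: mono\<close>)
  have "(\<phi> \<longlongrightarrow> L) (at_right p)"
  proof (rule order_tendstoI)
    fix a assume "a < L"
    have "eventually (\<lambda>y. y \<in> {p<..<1}) (at_right p)" using eventually_at_right_real p by auto
    then show "eventually (\<lambda>y. a < \<phi> y) (at_right p)"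
    proof (rule eventually_mono)
      fix y assume "y \<in> {p<..<1}"
      then have "L \<le> \<phi> y" unfolding L_def by (intro cInf_lower bdd) auto
      then show "a < \<phi> y" using \<open>a < L\<close> by simp
    qed
  next
    fix a assume "L < a"
    then obtain z where z: "z \<in> \<phi> ` {p<..1}" "z < a" using cInf_lessD[OF ne] unfolding L_def by blast
    then obtain y0 where y0: "y0 \<in> {p<..1}" "\<phi> y0 < a" by auto
    have "eventually (\<lambda>y. y \<in> {p<..<y0}) (at_right p)" using eventually_at_right_real y0 by auto
    then show "eventually (\<lambda>y. \<phi> y < a) (at_right p)"
    proof (rule eventually_mono)
      fix y assume "y \<in> {p<..<y0}"
      then have "\<phi> y \<le> \<phi> y0" using p y0 by (intro mono) auto
      then show "\<phi> y < a" using y0 by simp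
    qed
  qed
  then show ?thesis ..
qed

lemma mono_left_lim:
  fixes \<phi> :: "real \<Rightarrow> real"
  assumes mono: "\<And>x y. 0 \<le> x \<Longrightarrow> x \<le> y \<Longrightarrow> y \<le> 1 \<Longrightarrow> \<phi> x \<le> \<phi> y"
    and p: "0 < p" "p \<le> 1"
  shows "\<exists>L. (\<phi> \<longlongrightarrow> L) (at_left p)"
proof -
  define L where "L = Sup (\<phi> ` {0..<p})"
  have ne: "\<phi> ` {0..<p} \<noteq> {}" using p by auto
  have bdd: "bdd_above (\<phi> ` {0..<p})"
    by (rule bdd_aboveI[of _ "\<phi> p"]) (use p in \<open>auto intro: mono\<close>)
  have "(\<phi> \<longlongrightarrow> L) (at_left p)"
  proof (rule order_tendstoI)
    fix a assume "L < a"
    have "eventually (\<lambda>y. y \<in> {0<..<p}) (at_left p)" using eventually_at_left_real p by auto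
    then show "eventually (\<lambda>y. \<phi> y < a) (at_left p)"
    proof (rule eventually_mono)
      fix y assume "y \<in> {0<..<p}"
      then have "\<phi> y \<le> L" unfolding L_def by (intro cSup_upper bdd) auto
      then show "\<phi> y < a" using \<open>L < a\<close> by simp
    qed
  next
    fix a assume "a < L"
    then obtain z where z: "z \<in> \<phi> ` {0..<p}" "a < z" using less_cSupD[OF ne] unfolding L_def by blast
    then obtain y0 where y0: "y0 \<in> {0..<p}" "a < \<phi> y0" by auto
    have "eventually (\<lambda>y. y \<in> {y0<..<p}) (at_left p)" using eventually_at_left_real y0 by auto
    then show "eventually (\<lambda>y. a < \<phi> y) (at_left p)"
    proof (rule eventually_mono)
      fix y assume "y \<in> {y0<..<p}"
      then have "\<phi> y0 \<le> \<phi> y" using p y0 by (intro mono) auto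
      then show "a < \<phi> y" using y0 by simp
    qed
  qed
  then show ?thesis ..
qed

definition Vf :: "(real \<Rightarrow> real) \<Rightarrow> real \<Rightarrow> real" where
  "Vf f x = Sup {vs f xs | xs. sorted xs \<and> set xs \<subseteq> {0..x}}"

lemma Vf_step:
  assumes bv: "bounded_var01 f" and xy: "0 \<le> x" "x \<le> y" "y \<le> 1"
  shows "Vf f x + \<bar>f y - f x\<bar> \<le> Vf f y"
proof -
  have bddy: "bdd_above {vs f xs | xs. sorted xs \<and> set xs \<subseteq> {0..y}}"
    by (rule bdd_aboveI[of _ "TV01 f"]) (use xy in \<open>auto intro!: vs_le_TV[OF bv]\<close>)
  have "Vf f x \<le> Vf f y - \<bar>f y - f x\<bar>"
    unfolding Vf_def
  proof (rule cSup_least)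
    show "{vs f xs | xs. sorted xs \<and> set xs \<subseteq> {0..x}} \<noteq> {}" by (auto intro!: exI[of _ "[]"])
  next
    fix v assume "v \<in> {vs f xs | xs. sorted xs \<and> set xs \<subseteq> {0..x}}"
    then obtain xs where xs: "v = vs f xs" "sorted xs" "set xs \<subseteq> {0..x}" by auto
    have "vs f (xs @ [x, y]) = vs f (xs @ [x]) + \<bar>f y - f x\<bar>"
      using vs_snoc[of f "xs @ [x]" y] by simp
    moreover have "vs f (xs @ [x]) \<ge> vs f xs" using vs_snoc[of f xs x] by simp
    moreover have "sorted (xs @ [x, y])" using xs xy by (auto simp: sorted_append)
    moreover have st: "set (xs @ [x, y]) \<subseteq> {0..y}" using xs xy by auto
    ultimately have "v + \<bar>f y - f x\<bar> \<le> vs f (xs @ [x, y])" "vs f (xs @ [x, y]) \<le> Vf f y"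
      using xs st unfolding Vf_def by (auto intro!: cSup_upper[OF _ bddy] exI[of _ "xs @ [x, y]"] simp del: set_append)
    then have "v + \<bar>f y - f x\<bar> \<le> Vf f y" by linarith
    then show "v \<le> Sup {vs f xs | xs. sorted xs \<and> set xs \<subseteq> {0..y}} - \<bar>f y - f x\<bar>"
      unfolding Vf_def by simp
  qed
  then show ?thesis by simp
qed

lemma bv_right_lim:
  assumes bv: "bounded_var01 f" and p: "0 \<le> p" "p < 1"
  shows "\<exists>L. (f \<longlongrightarrow> L) (at_right p)"
proof -
  obtain L1 where L1: "(Vf f \<longlongrightarrow> L1) (at_right p)"
    using mono_right_lim[OF _ p, of "Vf f"] Vf_step[OF bv] by (smt (verit))
  obtain L2 where L2: "((\<lambda>x. Vf f x - f x) \<longlongrightarrow> L2) (at_right p)"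
    using mono_right_lim[OF _ p, of "\<lambda>x. Vf f x - f x"] Vf_step[OF bv] by (smt (verit))
  have "((\<lambda>x. Vf f x - (Vf f x - f x)) \<longlongrightarrow> L1 - L2) (at_right p)" by (intro tendsto_diff L1 L2)
  then show ?thesis by auto
qed

lemma bv_left_lim:
  assumes bv: "bounded_var01 f" and p: "0 < p" "p \<le> 1"
  shows "\<exists>L. (f \<longlongrightarrow> L) (at_left p)"
proof -
  obtain L1 where L1: "(Vf f \<longlongrightarrow> L1) (at_left p)"
    using mono_left_lim[OF _ p, of "Vf f"] Vf_step[OF bv] by (smt (verit))
  obtain L2 where L2: "((\<lambda>x. Vf f x - f x) \<longlongrightarrow> L2) (at_left p)"
    using mono_left_lim[OF _ p, of "\<lambda>x. Vf f x - f x"] Vf_step[OF bv] by (smt (verit))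
  have "((\<lambda>x. Vf f x - (Vf f x - f x)) \<longlongrightarrow> L1 - L2) (at_left p)" by (intro tendsto_diff L1 L2)
  then show ?thesis by auto
qed

lemma jump_le_TV:
  assumes bv: "bounded_var01 F" and p: "0 \<le> p" "p < 1" and L: "(F \<longlongrightarrow> L) (at_right p)"
  shows "\<bar>L - F p\<bar> \<le> TV01 F"
proof -
  have "((\<lambda>y. \<bar>F y - F p\<bar>) \<longlongrightarrow> \<bar>L - F p\<bar>) (at_right p)" by (intro tendsto_intros L)
  moreover have "eventually (\<lambda>y. \<bar>F y - F p\<bar> \<le> TV01 F) (at_right p)"
    using eventually_at_right_real[OF p(2)] by eventually_elim (use bv p in \<open>auto intro!: diff_le_TV\<close>)
  ultimately show ?thesis by (rule tendsto_upperbound) simp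
qed



definition ww :: "nat \<Rightarrow> real" where "ww n = (1/2) ^ n"
definition ser :: "(nat \<Rightarrow> bool) \<Rightarrow> real" where
  "ser b = (\<Sum>n. ww n * (if b n then 1 else 0))"

lemma summable_ww: "summable ww"
  unfolding ww_def by (rule summable_geometric) simp

lemma suminf_ww: "suminf ww = 2"
  unfolding ww_def by (subst suminf_geometric) simp_all

lemma ww_pos: "ww n > 0" unfolding ww_def by simp

lemma summable_ser: "summable (\<lambda>n. ww n * (if b n then 1 else 0))"
  by (rule summable_comparison_test'[OF summable_ww]) (auto simp: ww_def)

lemma ser_nonneg: "ser b \<ge> 0"
  unfolding ser_def by (intro suminf_nonneg summable_ser) (auto simp: ww_def)

lemma ser_le: "ser b \<le> 2"
proof -
  have "ser b \<le> suminf ww" unfolding ser_def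
    by (intro suminf_le summable_ser summable_ww) (auto simp: ww_def)
  then show ?thesis by (simp add: suminf_ww)
qed

lemma ser_mono: "(\<And>n. b n \<Longrightarrow> c n) \<Longrightarrow> ser b \<le> ser c"
  unfolding ser_def by (intro suminf_le summable_ser) (auto simp: ww_def)

lemma ser_term: "b n \<Longrightarrow> ww n \<le> ser b"
  unfolding ser_def
  using sum_le_suminf[OF summable_ser, of "{n}" b] by (auto simp: ww_def)

lemma ser_zero: "(\<And>n. \<not> b n) \<Longrightarrow> ser b = 0"
  unfolding ser_def by simp

lemma ser_nonzero: "ser b \<noteq> 0 \<Longrightarrow> \<exists>n. b n"
  using ser_zero by blast

lemma ser_diff: "(\<And>n. c n \<Longrightarrow> b n) \<Longrightarrow> ser b - ser c = ser (\<lambda>n. b n \<and> \<not> c n)"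
  unfolding ser_def
  by (subst suminf_diff[OF summable_ser summable_ser]) (intro arg_cong[where f=suminf] ext; auto)

lemma ser_tail:
  assumes "\<And>n. n < N \<Longrightarrow> \<not> b n"
  shows "ser b \<le> 2 * (1/2) ^ N"
proof -
  have "ser b = (\<Sum>n. ww (n + N) * (if b (n + N) then 1 else 0))"
    unfolding ser_def using assms by (subst suminf_split_initial_segment[OF summable_ser, where k=N]) simp
  also have "\<dots> \<le> (\<Sum>n. ww (n + N))"
    by (intro suminf_le summable_ignore_initial_segment[OF summable_ser]
          summable_ignore_initial_segment[OF summable_ww]) (auto simp: ww_def)
  also have "\<dots> = (1/2)^N * suminf ww"
    unfolding ww_def by (subst suminf_mult[symmetric]) (auto simp: power_add summable_ww[unfolded ww_def] mult.commute)
  finally show ?thesis by (simp add: suminf_ww)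
qed

lemma ser_tendsto0:
  assumes ev: "\<And>n. eventually (\<lambda>y. \<not> b n y) F"
  shows "((\<lambda>y. ser (\<lambda>n. b n y)) \<longlongrightarrow> 0) F"
proof (rule tendstoI)
  fix e :: real assume e: "e > 0"
  obtain N where N: "(1/2::real) ^ N < e / 2" using real_arch_pow_inv[of "e/2" "1/2"] e by auto
  have "eventually (\<lambda>y. \<forall>n\<in>{..<N}. \<not> b n y) F"
    by (rule eventually_ball_finite) (auto intro: ev)
  then show "eventually (\<lambda>y. dist (ser (\<lambda>n. b n y)) 0 < e) F"
  proof (rule eventually_mono)
    fix y assume "\<forall>n\<in>{..<N}. \<not> b n y"
    then have "ser (\<lambda>n. b n y) \<le> 2 * (1/2)^N" by (intro ser_tail) auto
    then show "dist (ser (\<lambda>n. b n y)) 0 < e" using ser_nonneg[of "\<lambda>n. b n y"] N by simp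
  qed
qed



definition rr :: "nat \<Rightarrow> real" where "rr n = real_of_rat (from_nat n)"
definition rep :: "real \<Rightarrow> real" where "rep t = (SOME s. s - t \<in> \<rat>)"
definition RR :: "real set" where "RR = range rep"
definition qq :: "real \<Rightarrow> nat \<Rightarrow> real" where "qq u n = frac (u + rr n)"
definition gg :: "real \<Rightarrow> real \<Rightarrow> real" where
  "gg u x = (if x \<le> 1 then ser (\<lambda>n. qq u n < x) else 0)"
definition WW :: "real \<Rightarrow> real \<Rightarrow> real" where "WW u p = ser (\<lambda>n. qq u n = p)"

lemma rep_rel: "rep t - t \<in> \<rat>"
  unfolding rep_def by (rule someI[of _ t]) simp

lemma rep_eq: assumes "s - t \<in> \<rat>" shows "rep s = rep t"
proof -
  have "(\<lambda>x. x - s \<in> \<rat>) = (\<lambda>x. x - t \<in> \<rat>)"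
  proof
    fix x
    have "x - t = (x - s) + (s - t)" "x - s = (x - t) - (s - t)" by simp_all
    then show "(x - s \<in> \<rat>) = (x - t \<in> \<rat>)" using assms by (metis Rats_add Rats_diff)
  qed
  then show ?thesis unfolding rep_def by simp
qed

lemma rep_RR: "u \<in> RR \<Longrightarrow> rep u = u"
  unfolding RR_def using rep_eq[OF rep_rel] by auto

lemma rep_in_RR: "rep t \<in> RR" unfolding RR_def by simp

lemma qq_range: "0 \<le> qq u n" "qq u n < 1"
  unfolding qq_def by (simp_all add: frac_lt_1)

lemma rr_rat: "rr n \<in> \<rat>" unfolding rr_def by simp

lemma rr_surj: "r \<in> \<rat> \<Longrightarrow> \<exists>n. rr n = r"
  unfolding rr_def by (auto elim!: Rats_cases) (metis from_nat_to_nat)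

lemma qq_rat: "qq u n = p \<Longrightarrow> p - u \<in> \<rat>"
proof -
  assume "qq u n = p"
  then have "p - u = rr n - of_int \<lfloor>u + rr n\<rfloor>" unfolding qq_def frac_def by simp
  then show ?thesis using rr_rat by (simp add: Rats_diff)
qed

lemma qq_same: assumes "u \<in> RR" "v \<in> RR" "qq u n = qq v m" shows "u = v"
proof -
  have "qq u n - u \<in> \<rat>" "qq v m - v \<in> \<rat>" using qq_rat by auto
  moreover have "u - v = (qq v m - v) - (qq u n - u)" using assms(3) by simp
  ultimately have "u - v \<in> \<rat>" by (metis Rats_diff)
  then show ?thesis using rep_eq rep_RR assms by metis
qed

lemma qq_hit:
  assumes "p - u \<in> \<rat>" "0 \<le> p" "p < 1"
  shows "\<exists>n. qq u n = p"
proof -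
  obtain n where "rr n = p - u" using rr_surj assms by blast
  then have "qq u n = p" unfolding qq_def using assms by (simp add: frac_eq)
  then show ?thesis ..
qed

lemma WW_pos: assumes "p - u \<in> \<rat>" "0 \<le> p" "p < 1" shows "WW u p > 0"
proof -
  obtain n where "qq u n = p" using qq_hit assms by blast
  then have "ww n \<le> WW u p" unfolding WW_def by (intro ser_term)
  then show ?thesis using ww_pos[of n] by simp
qed

lemma WW_zero: assumes "u \<in> RR" "u \<noteq> rep p" shows "WW u p = 0"
proof (rule ccontr)
  assume "WW u p \<noteq> 0"
  then obtain n where "qq u n = p" unfolding WW_def using ser_nonzero by blast
  then have "p - u \<in> \<rat>" by (rule qq_rat)
  then have "rep p = rep u" by (rule rep_eq)
  then show False using assms rep_RR by simp
qed

lemma WW_qq0: "WW u (qq u 0) \<ge> 1"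
  using ser_term[of "\<lambda>n. qq u n = qq u 0" 0] unfolding WW_def by (simp add: ww_def)

lemma gg_diff: assumes "x \<le> y" "y \<le> 1"
  shows "gg u y - gg u x = ser (\<lambda>n. x \<le> qq u n \<and> qq u n < y)"
proof -
  have "ser (\<lambda>n. qq u n < y) - ser (\<lambda>n. qq u n < x) = ser (\<lambda>n. qq u n < y \<and> \<not> qq u n < x)"
    by (rule ser_diff) (use assms in auto)
  also have "\<dots> = ser (\<lambda>n. x \<le> qq u n \<and> qq u n < y)" by (rule arg_cong[where f=ser]) auto
  finally show ?thesis unfolding gg_def using assms by simp
qed

lemma gg_bounds: "0 \<le> gg u x" "gg u x \<le> 2"
  unfolding gg_def using ser_nonneg ser_le by auto

lemma gg_mono: "x \<le> y \<Longrightarrow> y \<le> 1 \<Longrightarrow> gg u x \<le> gg u y"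
proof -
  assume a: "x \<le> y" "y \<le> 1"
  have "gg u y - gg u x \<ge> 0" using gg_diff[OF a, of u] ser_nonneg by simp
  then show ?thesis by simp
qed

lemma gg_out: assumes "x \<notin> {0..1}" shows "gg u x = 0"
proof (cases "x \<le> 1")
  case True
  then have "x < 0" using assms by auto
  have "\<not> qq u n < x" for n using qq_range(1)[of u n] \<open>x < 0\<close> by linarith
  then show ?thesis unfolding gg_def by (auto intro!: ser_zero)
qed (simp add: gg_def)

lemma gg_left:
  assumes "0 < p" "p \<le> 1"
  shows "(gg u \<longlongrightarrow> gg u p) (at_left p)"
proof -
  have 1: "((\<lambda>y. ser (\<lambda>n. y \<le> qq u n \<and> qq u n < p)) \<longlongrightarrow> 0) (at_left p)"
  proof (rule ser_tendsto0)
    fix n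
    show "eventually (\<lambda>y. \<not> (y \<le> qq u n \<and> qq u n < p)) (at_left p)"
    proof (cases "qq u n < p")
      case True
      show ?thesis by (rule eventually_mono[OF eventually_at_left_real[OF True]]) auto
    next
      case False then show ?thesis by simp
    qed
  qed
  have "eventually (\<lambda>y. ser (\<lambda>n. y \<le> qq u n \<and> qq u n < p) = gg u p - gg u y) (at_left p)"
    using eventually_at_left_real[OF assms(1)] by eventually_elim (use assms in \<open>simp add: gg_diff\<close>)
  with 1 have "((\<lambda>y. gg u p - gg u y) \<longlongrightarrow> 0) (at_left p)" by (rule Lim_transform_eventually)
  then have "((\<lambda>y. gg u p - (gg u p - gg u y)) \<longlongrightarrow> gg u p - 0) (at_left p)" by (intro tendsto_intros)
  then show ?thesis by simp
qed

lemma gg_right: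
  assumes "0 \<le> p" "p < 1"
  shows "(gg u \<longlongrightarrow> gg u p + WW u p) (at_right p)"
proof -
  have 1: "((\<lambda>y. ser (\<lambda>n. p < qq u n \<and> qq u n < y)) \<longlongrightarrow> 0) (at_right p)"
  proof (rule ser_tendsto0)
    fix n
    show "eventually (\<lambda>y. \<not> (p < qq u n \<and> qq u n < y)) (at_right p)"
    proof (cases "p < qq u n")
      case True
      show ?thesis by (rule eventually_mono[OF eventually_at_right_real[OF True]]) auto
    next
      case False then show ?thesis by simp
    qed
  qed
  have "eventually (\<lambda>y. ser (\<lambda>n. p < qq u n \<and> qq u n < y) = gg u y - gg u p - WW u p) (at_right p)"
    using eventually_at_right_real[OF assms(2)]
  proof eventually_elim
    case (elim y)
    then have "gg u y - gg u p = ser (\<lambda>n. p \<le> qq u n \<and> qq u n < y)" by (intro gg_diff) auto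
    moreover have "ser (\<lambda>n. p \<le> qq u n \<and> qq u n < y) - WW u p = ser (\<lambda>n. p < qq u n \<and> qq u n < y)"
      unfolding WW_def using elim by (subst ser_diff) (auto intro!: arg_cong[where f=ser])
    ultimately show ?case by simp
  qed
  with 1 have "((\<lambda>y. gg u y - gg u p - WW u p) \<longlongrightarrow> 0) (at_right p)" by (rule Lim_transform_eventually)
  then have "((\<lambda>y. (gg u y - gg u p - WW u p) + (gg u p + WW u p)) \<longlongrightarrow> 0 + (gg u p + WW u p)) (at_right p)"
    by (intro tendsto_intros)
  then show ?thesis by simp
qed

lemma vs_mono:
  assumes "\<And>x y. x \<in> {0..1} \<Longrightarrow> y \<in> {0..1} \<Longrightarrow> x \<le> y \<Longrightarrow> \<phi> x \<le> \<phi> y"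
  shows "sorted xs \<Longrightarrow> set xs \<subseteq> {0..1} \<Longrightarrow> xs \<noteq> [] \<Longrightarrow> vs \<phi> xs = \<phi> (last xs) - \<phi> (hd xs)"
proof (induction xs rule: induct_list012)
  case (3 x y zs)
  then show ?case using assms[of x y] by auto
qed auto

lemma gg_BV: "gg u \<in> BV01" "bounded_var01 (gg u)"
proof -
  have "vs (gg u) xs \<le> 2" if "sorted xs" "set xs \<subseteq> {0..1}" for xs
  proof (cases "xs = []")
    case False
    have "hd xs \<in> {0..1}" "last xs \<in> {0..1}" using that hd_in_set[OF False] last_in_set[OF False] by blast+
    then have "vs (gg u) xs = gg u (last xs) - gg u (hd xs)"
      using vs_mono[of "gg u" xs] gg_mono that False by (meson atLeastAtMost_iff)
    then show ?thesis using gg_bounds[of u "last xs"] gg_bounds[of u "hd xs"] by linarith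
  qed simp
  then show bv: "bounded_var01 (gg u)" by (rule bv_intro)
  then show "gg u \<in> BV01" unfolding BV01_def using gg_left gg_out by auto
qed



definition hsum :: "real set \<Rightarrow> (real \<Rightarrow> real) \<Rightarrow> real \<Rightarrow> real" where
  "hsum U C x = (\<Sum>v\<in>U. C v * gg v x)"

lemma bv_sum: "finite U \<Longrightarrow> (\<And>v. v \<in> U \<Longrightarrow> bounded_var01 (f v)) \<Longrightarrow> bounded_var01 (\<lambda>x. \<Sum>v\<in>U. f v x)"
proof (induction U rule: finite_induct)
  case empty then show ?case using bv_zero by simp
next
  case (insert a U)
  then show ?case using bv_add(1)[of "f a" "\<lambda>x. \<Sum>v\<in>U. f v x"] by simp
qed

lemma hsum_fun: "hsum U C = (\<lambda>x. \<Sum>v\<in>U. C v * gg v x)"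
  by (simp add: hsum_def fun_eq_iff)

lemma hsum_bv: "finite U \<Longrightarrow> bounded_var01 (hsum U C)"
  unfolding hsum_def by (intro bv_sum bv_scale gg_BV)

lemma hsum_BV01: assumes "finite U" shows "hsum U C \<in> BV01"
  using hsum_bv[OF assms, of C] unfolding BV01_def hsum_fun
  by (auto simp: gg_out intro!: tendsto_intros gg_left)

lemma hsum_right:
  assumes "finite U" "U \<subseteq> RR" "0 \<le> p" "p < 1"
  shows "(hsum U C \<longlongrightarrow> hsum U C p + (if rep p \<in> U then C (rep p) * WW (rep p) p else 0)) (at_right p)"
proof -
  have "((\<lambda>x. \<Sum>v\<in>U. C v * gg v x) \<longlongrightarrow> (\<Sum>v\<in>U. C v * (gg v p + WW v p))) (at_right p)"
    by (intro tendsto_intros gg_right assms)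
  moreover have "(\<Sum>v\<in>U. C v * (gg v p + WW v p)) = hsum U C p + (\<Sum>v\<in>U. C v * WW v p)"
    unfolding hsum_def by (simp add: distrib_left sum.distrib)
  moreover have "(\<Sum>v\<in>U. C v * WW v p) = (\<Sum>v\<in>U. if v = rep p then C v * WW v p else 0)"
    using WW_zero assms(2) by (intro sum.cong) auto
  moreover have "\<dots> = (if rep p \<in> U then C (rep p) * WW (rep p) p else 0)"
    by (rule sum.delta[OF assms(1)])
  ultimately show ?thesis unfolding hsum_fun by simp
qed

lemma hsum_bound: "\<bar>hsum U C x\<bar> \<le> 2 * (\<Sum>v\<in>U. \<bar>C v\<bar>)"
proof -
  have "\<bar>hsum U C x\<bar> \<le> (\<Sum>v\<in>U. \<bar>C v * gg v x\<bar>)" unfolding hsum_def by (rule sum_abs)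
  also have "\<dots> \<le> (\<Sum>v\<in>U. 2 * \<bar>C v\<bar>)"
    using gg_bounds by (intro sum_mono) (auto simp: abs_mult mult_left_mono mult.commute)
  finally show ?thesis by (simp add: sum_distrib_left)
qed

lemma vs_cons_ge: "vs F xs \<le> vs F (x # xs)"
  by (cases xs) (auto simp: vs_nonneg)

lemma pairs_lemma:
  assumes "sorted_wrt (\<lambda>a b. a + \<delta> \<le> b) ps" "\<delta> \<ge> 0"
  shows "sorted (concat (map (\<lambda>a. [a, a + \<delta>]) ps)) \<and>
         (\<Sum>a\<leftarrow>ps. \<bar>F (a + \<delta>) - F a\<bar>) \<le> vs F (concat (map (\<lambda>a. [a, a + \<delta>]) ps))"
  using assms
proof (induction ps)
  case Nil then show ?case by simp
next
  case (Cons a ps)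
  let ?r = "concat (map (\<lambda>a. [a, a + \<delta>]) ps)"
  have IH: "sorted ?r" "(\<Sum>a\<leftarrow>ps. \<bar>F (a + \<delta>) - F a\<bar>) \<le> vs F ?r" using Cons by auto
  have "\<forall>y\<in>set ?r. a + \<delta> \<le> y" using Cons.prems by auto
  then have "sorted (a # (a + \<delta>) # ?r)" using IH Cons.prems(2) by auto
  moreover have "vs F (a # (a + \<delta>) # ?r) = \<bar>F (a + \<delta>) - F a\<bar> + vs F ((a + \<delta>) # ?r)" by simp
  moreover note vs_cons_ge[of F ?r "a + \<delta>"]
  ultimately show ?case using IH by simp
qed

lemma key_ineq:
  assumes U: "finite U" "U \<subseteq> RR" and bvphi: "bounded_var01 \<phi>"
    and rc: "\<And>p. 0 \<le> p \<Longrightarrow> p < 1 \<Longrightarrow> (\<phi> \<longlongrightarrow> \<phi> p) (at_right p)"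
  shows "(\<Sum>v\<in>U. \<bar>C v\<bar>) \<le> TV01 (\<lambda>x. hsum U C x - \<phi> x)"
proof (rule field_le_epsilon)
  fix e :: real assume e: "e > 0"
  define F where "F = (\<lambda>x. hsum U C x - \<phi> x)"
  have bvF: "bounded_var01 F" unfolding F_def by (intro bv_diff hsum_bv U bvphi)
  define pt where "pt v = qq v 0" for v
  define e' where "e' = e / (real (card U) + 1)"
  have e': "e' > 0" unfolding e'_def using e by simp
  have pt01: "0 \<le> pt v" "pt v < 1" for v unfolding pt_def using qq_range by auto
  have inj: "inj_on pt U"
  proof (rule inj_onI)
    fix v w assume vw: "v \<in> U" "w \<in> U" "pt v = pt w"
    then have "v \<in> RR" "w \<in> RR" using U(2) by auto
    then show "v = w" using qq_same[of v w 0 0] vw(3) unfolding pt_def by simp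
  qed
  have reppt: "rep (pt v) = v" if "v \<in> U" for v
  proof -
    have "pt v - v \<in> \<rat>" unfolding pt_def by (rule qq_rat) simp
    moreover have "v \<in> RR" using U(2) that by auto
    ultimately show ?thesis using rep_eq[of "pt v" v] rep_RR[of v] by simp
  qed
  have ev1: "eventually (\<lambda>d. \<bar>C v\<bar> - e' < \<bar>F (d + pt v) - F (pt v)\<bar>) (at_right 0)" if v: "v \<in> U" for v
  proof -
    have h1: "(hsum U C \<longlongrightarrow> hsum U C (pt v) + C v * WW v (pt v)) (at_right (pt v))"
      using hsum_right[OF U pt01(1) pt01(2), of C v] reppt[OF v] v by simp
    have h2: "(\<phi> \<longlongrightarrow> \<phi> (pt v)) (at_right (pt v))" by (rule rc[OF pt01])
    have h3: "(F \<longlongrightarrow> (hsum U C (pt v) + C v * WW v (pt v)) - \<phi> (pt v)) (at_right (pt v))"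
      unfolding F_def by (rule tendsto_diff[OF h1 h2])
    have "((\<lambda>y. F y - F (pt v)) \<longlongrightarrow> ((hsum U C (pt v) + C v * WW v (pt v)) - \<phi> (pt v)) - F (pt v)) (at_right (pt v))"
      by (rule tendsto_diff[OF h3 tendsto_const])
    then have "((\<lambda>y. \<bar>F y - F (pt v)\<bar>) \<longlongrightarrow> \<bar>((hsum U C (pt v) + C v * WW v (pt v)) - \<phi> (pt v)) - F (pt v)\<bar>) (at_right (pt v))"
      by (rule tendsto_rabs)
    moreover have "\<bar>((hsum U C (pt v) + C v * WW v (pt v)) - \<phi> (pt v)) - F (pt v)\<bar> = \<bar>C v * WW v (pt v)\<bar>"
      unfolding F_def by simp
    ultimately have lim: "((\<lambda>y. \<bar>F y - F (pt v)\<bar>) \<longlongrightarrow> \<bar>C v * WW v (pt v)\<bar>) (at_right (pt v))" by simp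
    have W1: "1 \<le> \<bar>WW v (pt v)\<bar>" using WW_qq0[of v] unfolding pt_def by simp
    have "\<bar>C v\<bar> * 1 \<le> \<bar>C v\<bar> * \<bar>WW v (pt v)\<bar>" by (rule mult_left_mono[OF W1]) simp
    then have "\<bar>C v\<bar> \<le> \<bar>C v * WW v (pt v)\<bar>" by (simp add: abs_mult)
    then have "\<bar>C v\<bar> - e' < \<bar>C v * WW v (pt v)\<bar>" using e' by linarith
    then have "eventually (\<lambda>y. \<bar>C v\<bar> - e' < \<bar>F y - F (pt v)\<bar>) (at_right (pt v))"
      by (rule order_tendstoD(1)[OF lim])
    then show ?thesis by (subst (asm) eventually_at_right_to_0)
  qed
  have ev2: "eventually (\<lambda>d. d + pt v < pt w) (at_right 0)" if "pt v < pt w" for v w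
    by (rule eventually_mono[OF eventually_at_right_real[of 0 "pt w - pt v"]]) (use that in auto)
  have ev3: "eventually (\<lambda>d. d + pt v < 1) (at_right 0)" for v
    by (rule eventually_mono[OF eventually_at_right_real[of 0 "1 - pt v"]]) (use pt01[of v] in auto)
  have evall: "eventually (\<lambda>d. 0 < d \<and> (\<forall>v\<in>U. \<bar>C v\<bar> - e' < \<bar>F (d + pt v) - F (pt v)\<bar> \<and> d + pt v < 1
           \<and> (\<forall>w\<in>U. pt v < pt w \<longrightarrow> d + pt v < pt w))) (at_right 0)"
    using eventually_at_right_real[of 0 1]
  proof (intro eventually_conj eventually_ball_finite ballI U)
    show "eventually (\<lambda>d. 0 < d) (at_right (0::real))" by (simp add: eventually_at_right_less)
    fix v assume v: "v \<in> U"
    show "eventually (\<lambda>d. \<bar>C v\<bar> - e' < \<bar>F (d + pt v) - F (pt v)\<bar>) (at_right 0)" using ev1 v .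
    show "eventually (\<lambda>d. d + pt v < 1) (at_right 0)" by (rule ev3)
    fix w assume "w \<in> U"
    show "eventually (\<lambda>d. pt v < pt w \<longrightarrow> d + pt v < pt w) (at_right 0)"
      by (cases "pt v < pt w") (auto intro: ev2)
  qed
  obtain d where dd: "0 < d \<and> (\<forall>v\<in>U. \<bar>C v\<bar> - e' < \<bar>F (d + pt v) - F (pt v)\<bar> \<and> d + pt v < 1
           \<and> (\<forall>w\<in>U. pt v < pt w \<longrightarrow> d + pt v < pt w))"
    using eventually_happens[OF evall] by auto
  then have d: "0 < d" "\<And>v. v \<in> U \<Longrightarrow> \<bar>C v\<bar> - e' < \<bar>F (d + pt v) - F (pt v)\<bar>"
    "\<And>v. v \<in> U \<Longrightarrow> d + pt v < 1" "\<And>v w. v \<in> U \<Longrightarrow> w \<in> U \<Longrightarrow> pt v < pt w \<Longrightarrow> d + pt v < pt w"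
    by blast+
  define ps where "ps = sorted_list_of_set (pt ` U)"
  have setps: "set ps = pt ` U" and dps: "distinct ps" unfolding ps_def using U by auto
  have "sorted_wrt (\<lambda>a b. a + d \<le> b) ps"
  proof (rule sorted_wrt_mono_rel[OF _ strict_sorted_list_of_set[of "pt ` U", folded ps_def]])
    fix x y assume xy: "x \<in> set ps" "y \<in> set ps" "x < y"
    then obtain v w where vw: "v \<in> U" "w \<in> U" "x = pt v" "y = pt w" using setps by auto
    then have "d + pt v < pt w" using d(4) xy(3) by blast
    then show "x + d \<le> y" using vw by simp
  qed
  from pairs_lemma[OF this, of F] d(1) have
    srt: "sorted (concat (map (\<lambda>a. [a, a + d]) ps))" and
    le1: "(\<Sum>a\<leftarrow>ps. \<bar>F (a + d) - F a\<bar>) \<le> vs F (concat (map (\<lambda>a. [a, a + d]) ps))" by auto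
  have "set (concat (map (\<lambda>a. [a, a + d]) ps)) \<subseteq> {0..1}"
  proof
    fix z assume "z \<in> set (concat (map (\<lambda>a. [a, a + d]) ps))"
    then obtain a where a: "a \<in> set ps" "z = a \<or> z = a + d" by auto
    then obtain v where v: "v \<in> U" "a = pt v" using setps by auto
    show "z \<in> {0..1}" using a v pt01[of v] d(1) d(3)[OF v(1)] by auto
  qed
  with srt have le2: "vs F (concat (map (\<lambda>a. [a, a + d]) ps)) \<le> TV01 F" by (intro vs_le_TV bvF)
  have "(\<Sum>a\<leftarrow>ps. \<bar>F (a + d) - F a\<bar>) = (\<Sum>a\<in>pt ` U. \<bar>F (a + d) - F a\<bar>)"
    using sum_list_distinct_conv_sum_set[OF dps] setps by simp
  also have "\<dots> = (\<Sum>v\<in>U. \<bar>F (pt v + d) - F (pt v)\<bar>)" by (simp add: sum.reindex[OF inj])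
  finally have eq: "(\<Sum>a\<leftarrow>ps. \<bar>F (a + d) - F a\<bar>) = (\<Sum>v\<in>U. \<bar>F (pt v + d) - F (pt v)\<bar>)" .
  have "(\<Sum>v\<in>U. \<bar>C v\<bar> - e') \<le> (\<Sum>v\<in>U. \<bar>F (pt v + d) - F (pt v)\<bar>)"
    using d(2) by (intro sum_mono) (simp add: add.commute less_imp_le)
  then have "(\<Sum>v\<in>U. \<bar>C v\<bar>) - real (card U) * e' \<le> TV01 F"
    using le1 le2 eq by (simp add: sum_subtractf)
  moreover have "real (card U) * e' \<le> e"
    unfolding e'_def using e by (simp add: field_simps)
  ultimately show "(\<Sum>v\<in>U. \<bar>C v\<bar>) \<le> TV01 (\<lambda>x. hsum U C x - \<phi> x) + e" unfolding F_def by linarith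
qed



definition spanG :: "(real \<Rightarrow> real) set" where
  "spanG = {hsum U C | U C. finite U \<and> U \<subseteq> RR}"

definition SS :: "(real \<Rightarrow> real) set" where
  "SS = {f \<in> BV01. \<exists>h. (\<forall>k. h k \<in> spanG) \<and> (\<lambda>k. bv_norm (\<lambda>x. h k x - f x)) \<longlonglongrightarrow> 0}"

lemma BV01_bv: "f \<in> BV01 \<Longrightarrow> bounded_var01 f" unfolding BV01_def by auto

lemma span_BV01: "h \<in> spanG \<Longrightarrow> h \<in> BV01"
  unfolding spanG_def using hsum_BV01 by auto

lemma span_bv: "h \<in> spanG \<Longrightarrow> bounded_var01 h"
  using span_BV01 BV01_bv by auto

lemma BV01_add: "f \<in> BV01 \<Longrightarrow> g \<in> BV01 \<Longrightarrow> (\<lambda>x. f x + g x) \<in> BV01"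
  unfolding BV01_def using bv_add(1) by (auto intro!: tendsto_intros)

lemma BV01_scale: "f \<in> BV01 \<Longrightarrow> (\<lambda>x. c * f x) \<in> BV01"
  unfolding BV01_def using bv_scale(1) by (auto intro!: tendsto_intros)

lemma BV01_zero: "(\<lambda>x. 0) \<in> BV01"
  unfolding BV01_def using bv_zero by auto

lemma span_zero: "(\<lambda>x. 0) \<in> spanG"
  unfolding spanG_def by (auto intro!: exI[of _ "{}"] simp: hsum_fun)

lemma span_add: assumes "h1 \<in> spanG" "h2 \<in> spanG" shows "(\<lambda>x. h1 x + h2 x) \<in> spanG"
proof -
  obtain U1 C1 where 1: "h1 = hsum U1 C1" "finite U1" "U1 \<subseteq> RR" using assms(1) unfolding spanG_def by auto
  obtain U2 C2 where 2: "h2 = hsum U2 C2" "finite U2" "U2 \<subseteq> RR" using assms(2) unfolding spanG_def by auto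
  define C where "C v = (if v \<in> U1 then C1 v else 0) + (if v \<in> U2 then C2 v else 0)" for v
  have "hsum (U1 \<union> U2) C x = h1 x + h2 x" for x
  proof -
    have "hsum (U1 \<union> U2) C x = (\<Sum>v\<in>U1 \<union> U2. if v \<in> U1 then C1 v * gg v x else 0)
          + (\<Sum>v\<in>U1 \<union> U2. if v \<in> U2 then C2 v * gg v x else 0)"
    proof -
      have "C v * gg v x = (if v \<in> U1 then C1 v * gg v x else 0) + (if v \<in> U2 then C2 v * gg v x else 0)" for v
        by (simp add: C_def distrib_right)
      then show ?thesis unfolding hsum_def by (simp add: sum.distrib)
    qed
    also have "\<dots> = (\<Sum>v\<in>(U1 \<union> U2) \<inter> U1. C1 v * gg v x) + (\<Sum>v\<in>(U1 \<union> U2) \<inter> U2. C2 v * gg v x)"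
      using 1 2 by (simp only: sum.inter_restrict finite_Un)
    also have "\<dots> = h1 x + h2 x" using 1 2 by (simp add: hsum_def Int_absorb1)
    finally show ?thesis .
  qed
  then have "(\<lambda>x. h1 x + h2 x) = hsum (U1 \<union> U2) C" by auto
  then show ?thesis unfolding spanG_def using 1 2 by auto
qed

lemma span_scale: assumes "h \<in> spanG" shows "(\<lambda>x. c * h x) \<in> spanG"
proof -
  obtain U C where 1: "h = hsum U C" "finite U" "U \<subseteq> RR" using assms unfolding spanG_def by auto
  have "(\<lambda>x. c * h x) = hsum U (\<lambda>v. c * C v)"
    using 1 by (auto simp: hsum_def sum_distrib_left mult.assoc fun_eq_iff)
  then show ?thesis unfolding spanG_def using 1 by auto
qed

lemma norm_tends_zero:
  fixes a b :: "nat \<Rightarrow> real"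
  assumes "\<And>k. 0 \<le> a k" "\<And>k. a k \<le> b k" "b \<longlonglongrightarrow> 0"
  shows "a \<longlonglongrightarrow> 0"
  by (rule tendsto_sandwich[of "\<lambda>_. 0" a sequentially b]) (use assms in auto)

lemma SS_linear: "bv_linear_subspace SS"
  unfolding bv_linear_subspace_def
proof (intro conjI ballI allI)
  show "SS \<subseteq> BV01" unfolding SS_def by auto
  show "(\<lambda>_. 0) \<in> SS" unfolding SS_def using BV01_zero span_zero bv_zero
    by (auto intro!: exI[of _ "\<lambda>k x. 0"])
next
  fix f g assume f: "f \<in> SS" and g: "g \<in> SS"
  obtain hf where hf: "\<And>k. hf k \<in> spanG" "(\<lambda>k. bv_norm (\<lambda>x. hf k x - f x)) \<longlonglongrightarrow> 0"
    using f unfolding SS_def by auto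
  obtain hg where hg: "\<And>k. hg k \<in> spanG" "(\<lambda>k. bv_norm (\<lambda>x. hg k x - g x)) \<longlonglongrightarrow> 0"
    using g unfolding SS_def by auto
  have bf: "bounded_var01 f" "bounded_var01 g" using f g unfolding SS_def by (auto intro: BV01_bv)
  have "(\<lambda>k. bv_norm (\<lambda>x. (hf k x + hg k x) - (f x + g x))) \<longlonglongrightarrow> 0"
  proof (rule norm_tends_zero)
    fix k
    have b1: "bounded_var01 (\<lambda>x. hf k x - f x)" "bounded_var01 (\<lambda>x. hg k x - g x)"
      using bv_diff[OF span_bv[OF hf(1)] bf(1)] bv_diff[OF span_bv[OF hg(1)] bf(2)] by auto
    have "(\<lambda>x. (hf k x + hg k x) - (f x + g x)) = (\<lambda>x. (hf k x - f x) + (hg k x - g x))" by auto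
    then show "bv_norm (\<lambda>x. (hf k x + hg k x) - (f x + g x))
       \<le> bv_norm (\<lambda>x. hf k x - f x) + bv_norm (\<lambda>x. hg k x - g x)"
      using norm_add[OF b1] by simp
    show "0 \<le> bv_norm (\<lambda>x. (hf k x + hg k x) - (f x + g x))"
      using norm_nonneg[OF bv_add(1)[OF b1]] \<open>(\<lambda>x. (hf k x + hg k x) - (f x + g x)) = _\<close> by simp
  next
    show "(\<lambda>k. bv_norm (\<lambda>x. hf k x - f x) + bv_norm (\<lambda>x. hg k x - g x)) \<longlonglongrightarrow> 0"
      using tendsto_add[OF hf(2) hg(2)] by simp
  qed
  then show "(\<lambda>x. f x + g x) \<in> SS" unfolding SS_def using f g hf hg
    by (auto intro!: BV01_add exI[of _ "\<lambda>k x. hf k x + hg k x"] span_add simp: SS_def)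
next
  fix c :: real and f assume f: "f \<in> SS"
  obtain hf where hf: "\<And>k. hf k \<in> spanG" "(\<lambda>k. bv_norm (\<lambda>x. hf k x - f x)) \<longlonglongrightarrow> 0"
    using f unfolding SS_def by auto
  have bf: "bounded_var01 f" using f unfolding SS_def by (auto intro: BV01_bv)
  have "(\<lambda>k. bv_norm (\<lambda>x. c * hf k x - c * f x)) \<longlonglongrightarrow> 0"
  proof (rule norm_tends_zero)
    fix k
    have b1: "bounded_var01 (\<lambda>x. hf k x - f x)" using bv_diff[OF span_bv[OF hf(1)] bf] by auto
    have "(\<lambda>x. c * hf k x - c * f x) = (\<lambda>x. c * (hf k x - f x))" by (auto simp: algebra_simps)
    then show "bv_norm (\<lambda>x. c * hf k x - c * f x) \<le> \<bar>c\<bar> * bv_norm (\<lambda>x. hf k x - f x)"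
      using norm_scale[OF b1] by simp
    show "0 \<le> bv_norm (\<lambda>x. c * hf k x - c * f x)"
      using norm_nonneg[OF bv_scale(1)[OF b1, of c]] \<open>(\<lambda>x. c * hf k x - c * f x) = _\<close> by simp
  next
    show "(\<lambda>k. \<bar>c\<bar> * bv_norm (\<lambda>x. hf k x - f x)) \<longlonglongrightarrow> 0"
      using tendsto_mult[OF tendsto_const hf(2), of "\<bar>c\<bar>"] by simp
  qed
  then show "(\<lambda>x. c * f x) \<in> SS" unfolding SS_def using f hf
    by (auto intro!: BV01_scale exI[of _ "\<lambda>k x. c * hf k x"] span_scale simp: SS_def)
qed

lemma SS_closed: "bv_closed SS"
  unfolding bv_closed_def
proof (intro allI impI, elim conjE)
  fix g f assume g: "\<forall>n. g n \<in> SS" and f: "f \<in> BV01"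
    and lim: "(\<lambda>n. bv_norm (\<lambda>x. g n x - f x)) \<longlonglongrightarrow> 0"
  have "\<exists>H. H \<in> spanG \<and> bv_norm (\<lambda>x. H x - g n x) < 1 / (real n + 1)" for n
  proof -
    obtain h where h: "\<And>k. h k \<in> spanG" "(\<lambda>k. bv_norm (\<lambda>x. h k x - g n x)) \<longlonglongrightarrow> 0"
      using g unfolding SS_def by auto
    have "eventually (\<lambda>k. bv_norm (\<lambda>x. h k x - g n x) < 1 / (real n + 1)) sequentially"
      by (rule order_tendstoD(2)[OF h(2)]) simp
    then obtain k where "bv_norm (\<lambda>x. h k x - g n x) < 1 / (real n + 1)"
      by (auto simp: eventually_sequentially)
    then show ?thesis using h(1) by blast
  qed
  then obtain H where H: "\<And>n. H n \<in> spanG" "\<And>n. bv_norm (\<lambda>x. H n x - g n x) < 1 / (real n + 1)"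
    by metis
  have bf: "bounded_var01 f" using f by (rule BV01_bv)
  have bg: "bounded_var01 (g n)" for n using g unfolding SS_def by (auto intro: BV01_bv)
  have "(\<lambda>n. bv_norm (\<lambda>x. H n x - f x)) \<longlonglongrightarrow> 0"
  proof (rule norm_tends_zero)
    fix n
    show "0 \<le> bv_norm (\<lambda>x. H n x - f x)" using norm_nonneg[OF bv_diff[OF span_bv[OF H(1)] bf]] .
    have "bv_norm (\<lambda>x. H n x - f x) \<le> bv_norm (\<lambda>x. H n x - g n x) + bv_norm (\<lambda>x. g n x - f x)"
      by (rule norm_tri[OF span_bv[OF H(1)] bg bf])
    then show "bv_norm (\<lambda>x. H n x - f x) \<le> 1 / (real n + 1) + bv_norm (\<lambda>x. g n x - f x)"
      using H(2)[of n] by linarith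
  next
    have "(\<lambda>n. 1 / (real n + 1)) \<longlonglongrightarrow> 0" using LIMSEQ_inverse_real_of_nat by (simp add: inverse_eq_divide add.commute)
    then show "(\<lambda>n. 1 / (real n + 1) + bv_norm (\<lambda>x. g n x - f x)) \<longlonglongrightarrow> 0"
      using tendsto_add[OF _ lim] by fastforce
  qed
  then show "f \<in> SS" unfolding SS_def using f H(1) by auto
qed



lemma SS_repr:
  assumes "f \<in> SS"
  obtains U C where "\<And>k. finite (U k)" "\<And>k. U k \<subseteq> RR"
    "(\<lambda>k. bv_norm (\<lambda>x. hsum (U k) (C k) x - f x)) \<longlonglongrightarrow> 0"
proof -
  obtain h where h: "\<And>k. h k \<in> spanG" "(\<lambda>k. bv_norm (\<lambda>x. h k x - f x)) \<longlonglongrightarrow> 0"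
    using assms unfolding SS_def by auto
  have "\<forall>k. \<exists>U C. h k = hsum U C \<and> finite U \<and> U \<subseteq> RR" using h(1) unfolding spanG_def by blast
  then obtain U C where UC: "\<And>k. h k = hsum (U k) (C k)" "\<And>k. finite (U k)" "\<And>k. U k \<subseteq> RR" by metis
  show ?thesis by (rule that[OF UC(2,3)]) (use h(2) UC(1) in simp)
qed

lemma TV_le_norm: "TV01 F \<le> bv_norm F" unfolding bv_norm_def by simp

lemma SS_rc_zero:
  assumes f: "f \<in> SS" and rc: "\<And>p. 0 \<le> p \<Longrightarrow> p < 1 \<Longrightarrow> (f \<longlongrightarrow> f p) (at_right p)"
  shows "f = (\<lambda>_. 0)"
proof
  fix x
  have fBV: "f \<in> BV01" using f unfolding SS_def by auto
  then have bvf: "bounded_var01 f" by (rule BV01_bv)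
  obtain U C where U: "\<And>k. finite (U k)" "\<And>k. U k \<subseteq> RR"
    and lim: "(\<lambda>k. bv_norm (\<lambda>x. hsum (U k) (C k) x - f x)) \<longlonglongrightarrow> 0"
    using SS_repr[OF f] by blast
  define a where "a k = bv_norm (\<lambda>x. hsum (U k) (C k) x - f x)" for k
  show "f x = 0"
  proof (cases "x \<in> {0..1}")
    case False
    then show ?thesis using fBV unfolding BV01_def by auto
  next
    case True
    have bnd: "\<bar>f x\<bar> \<le> 3 * a k" for k
    proof -
      have bvk: "bounded_var01 (\<lambda>x. hsum (U k) (C k) x - f x)" by (intro bv_diff hsum_bv U bvf)
      have 1: "\<bar>hsum (U k) (C k) x - f x\<bar> \<le> a k" unfolding a_def using val_le_norm[OF bvk True] by simp
      have 2: "(\<Sum>v\<in>U k. \<bar>C k v\<bar>) \<le> a k"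
        using key_ineq[OF U(1) U(2) bvf rc, of "C k"] TV_le_norm unfolding a_def by (meson order_trans)
      have 3: "\<bar>hsum (U k) (C k) x\<bar> \<le> 2 * (\<Sum>v\<in>U k. \<bar>C k v\<bar>)" by (rule hsum_bound)
      show ?thesis using 1 2 3 by linarith
    qed
    have "(\<lambda>k. 3 * a k) \<longlonglongrightarrow> 3 * 0" unfolding a_def by (intro tendsto_intros lim)
    then have "\<bar>f x\<bar> \<le> 0"
      by (intro tendsto_le[OF trivial_limit_sequentially, of "\<lambda>k. 3 * a k" 0 "\<lambda>_. \<bar>f x\<bar>"])
         (auto intro: always_eventually bnd)
    then show ?thesis by simp
  qed
qed

lemma jump_conv:
  assumes bvf: "bounded_var01 f" and U: "finite U" "U \<subseteq> RR" and p: "0 \<le> p" "p < 1"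
    and L: "(f \<longlongrightarrow> L) (at_right p)"
  shows "\<bar>(if rep p \<in> U then C (rep p) else 0) * WW (rep p) p - (L - f p)\<bar> \<le> bv_norm (\<lambda>x. hsum U C x - f x)"
proof -
  define J where "J = (if rep p \<in> U then C (rep p) * WW (rep p) p else 0)"
  have J: "J = (if rep p \<in> U then C (rep p) else 0) * WW (rep p) p" unfolding J_def by simp
  have bvF: "bounded_var01 (\<lambda>x. hsum U C x - f x)" by (intro bv_diff hsum_bv U bvf)
  have "((\<lambda>x. hsum U C x - f x) \<longlongrightarrow> (hsum U C p + J) - L) (at_right p)"
    unfolding J_def by (intro tendsto_diff hsum_right U p L)
  from jump_le_TV[OF bvF p this] have "\<bar>(hsum U C p + J - L) - (hsum U C p - f p)\<bar> \<le> TV01 (\<lambda>x. hsum U C x - f x)" .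
  then show ?thesis using TV_le_norm[of "\<lambda>x. hsum U C x - f x"] unfolding J[symmetric] by simp
qed

lemma conv_from_bound:
  fixes x a :: "nat \<Rightarrow> real"
  assumes "\<And>k. \<bar>x k - l\<bar> \<le> a k" "a \<longlonglongrightarrow> 0"
  shows "x \<longlonglongrightarrow> l"
proof -
  have "(\<lambda>k. x k - l) \<longlonglongrightarrow> 0"
  proof (rule tendsto_sandwich[of "\<lambda>k. - a k" _ _ a])
    show "eventually (\<lambda>k. - a k \<le> x k - l) sequentially" using assms(1) by (intro always_eventually allI) (smt (verit))
    show "eventually (\<lambda>k. x k - l \<le> a k) sequentially" using assms(1) by (auto intro!: always_eventually simp: abs_le_iff)
    show "(\<lambda>k. - a k) \<longlonglongrightarrow> 0" using tendsto_minus[OF assms(2)] by simp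
  qed (rule assms(2))
  then have "(\<lambda>k. (x k - l) + l) \<longlonglongrightarrow> 0 + l" by (intro tendsto_intros)
  then show ?thesis by simp
qed



lemma rep_idem: "rep (rep t) = rep t"
  by (rule rep_eq[OF rep_rel])

lemma SS_Fcal:
  assumes f: "f \<in> SS" and nz: "f \<noteq> (\<lambda>_. 0)"
  shows "f \<in> Fcal"
proof -
  have fBV: "f \<in> BV01" using f unfolding SS_def by auto
  then have bvf: "bounded_var01 f" by (rule BV01_bv)
  obtain U C where U: "\<And>k. finite (U k)" "\<And>k. U k \<subseteq> RR"
    and lim: "(\<lambda>k. bv_norm (\<lambda>x. hsum (U k) (C k) x - f x)) \<longlonglongrightarrow> 0"
    using SS_repr[OF f] by blast
  obtain p where p: "0 \<le> p" "p < 1" "\<not> (f \<longlongrightarrow> f p) (at_right p)"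
    using SS_rc_zero[OF f] nz by blast
  obtain L where L: "(f \<longlongrightarrow> L) (at_right p)" using bv_right_lim[OF bvf p(1,2)] by blast
  have LL: "L \<noteq> f p" using L p(3) by auto
  define u where "u = rep p"
  have uRR: "u \<in> RR" unfolding u_def by (rule rep_in_RR)
  have pu: "p - u \<in> \<rat>" unfolding u_def using rep_rel[of p] Rats_minus_iff[of "rep p - p"] by simp
  define Wp where "Wp = WW u p"
  have Wp: "Wp > 0" unfolding Wp_def by (rule WW_pos[OF pu p(1,2)])
  define c where "c k = (if u \<in> U k then C k u else 0)" for k
  have cconv: "(\<lambda>k. c k * WW u q) \<longlonglongrightarrow> Lq - f q"
    if q: "0 \<le> q" "q < 1" "rep q = u" and Lq: "(f \<longlongrightarrow> Lq) (at_right q)" for q Lq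
  proof (rule conv_from_bound[OF _ lim])
    fix k
    show "\<bar>c k * WW u q - (Lq - f q)\<bar> \<le> bv_norm (\<lambda>x. hsum (U k) (C k) x - f x)"
      using jump_conv[OF bvf U(1)[of k] U(2)[of k] q(1,2) Lq, where C="C k"] unfolding q(3) c_def .
  qed
  have "(\<lambda>k. c k * Wp) \<longlonglongrightarrow> L - f p"
    unfolding Wp_def by (rule cconv[OF p(1,2) _ L]) (simp add: u_def)
  then have "(\<lambda>k. c k * Wp / Wp) \<longlonglongrightarrow> (L - f p) / Wp" using Wp by (intro tendsto_intros) simp_all
  then have climit: "c \<longlonglongrightarrow> (L - f p) / Wp" using Wp by simp
  have jp: "q \<in> jump_points f" if q: "0 < q" "q < 1" "q - u \<in> \<rat>" for q
  proof -
    have repq: "rep q = u" using rep_eq[OF q(3)] rep_RR[OF uRR] by simp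
    have Wq: "WW u q > 0" by (rule WW_pos) (use q in auto)
    obtain Lq where Lq: "(f \<longlongrightarrow> Lq) (at_right q)" using bv_right_lim[OF bvf] q by fastforce
    have t1: "(\<lambda>k. c k * WW u q) \<longlonglongrightarrow> Lq - f q" by (rule cconv) (use q repq Lq in auto)
    have t2: "(\<lambda>k. c k * WW u q) \<longlonglongrightarrow> (L - f p) / Wp * WW u q" by (intro tendsto_intros climit)
    have "Lq - f q = (L - f p) / Wp * WW u q" using LIMSEQ_unique[OF t1 t2] .
    moreover have "(L - f p) / Wp * WW u q \<noteq> 0" using LL Wp Wq by simp
    ultimately have Lqne: "Lq \<noteq> f q" by (metis diff_self)
    have nc: "\<not> continuous (at q within {0..1}) f"
    proof
      assume "continuous (at q within {0..1}) f"
      then have "(f \<longlongrightarrow> f q) (at q within {0..1})" by (simp add: continuous_within)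
      then have "(f \<longlongrightarrow> f q) (at q within {q..1})" by (rule tendsto_within_subset) (use q in auto)
      then have "(f \<longlongrightarrow> f q) (at_right q)" using at_within_Icc_at_right[OF q(2)] by simp
      then show False using tendsto_unique[OF trivial_limit_at_right_real Lq] Lqne by auto
    qed
    obtain Lm where "(f \<longlongrightarrow> Lm) (at_left q)" using bv_left_lim[OF bvf] q by fastforce
    then show ?thesis unfolding jump_points_def using q nc Lq by auto
  qed
  have "{0..1} \<subseteq> closure (jump_points f)"
  proof
    fix x :: real assume x: "x \<in> {0..1}"
    show "x \<in> closure (jump_points f)"
      unfolding closure_approachable
    proof (intro allI impI)
      fix e :: real assume e: "e > 0"
      obtain a b where ab: "0 \<le> a" "a < b" "b \<le> 1" "\<And>y. a < y \<Longrightarrow> y < b \<Longrightarrow> dist y x < e"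
      proof (cases "x < 1")
        case True
        show ?thesis by (rule that[of x "min 1 (x + e)"]) (use x e True in \<open>auto simp: dist_real_def\<close>)
      next
        case False
        then have "x = 1" using x by auto
        show ?thesis by (rule that[of "max 0 (1 - e)" 1]) (use \<open>x = 1\<close> e in \<open>auto simp: dist_real_def\<close>)
      qed
      obtain r where r: "r \<in> \<rat>" "a - u < r" "r < b - u" using Rats_dense_in_real[of "a - u" "b - u"] ab by auto
      have "u + r \<in> jump_points f" by (rule jp) (use r ab in auto)
      moreover have "dist (u + r) x < e" using ab(4)[of "u + r"] r by auto
      ultimately show "\<exists>y\<in>jump_points f. dist y x < e" by blast
    qed
  qed
  then show ?thesis unfolding Fcal_def using bvf by auto
qed

lemma gg_SS: "u \<in> RR \<Longrightarrow> gg u \<in> SS"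
proof -
  assume u: "u \<in> RR"
  have e: "gg u = hsum {u} (\<lambda>_. 1)" by (simp add: hsum_fun)
  have "gg u \<in> spanG" unfolding spanG_def using u e by blast
  then show ?thesis unfolding SS_def using gg_BV bv_zero by (auto intro!: exI[of _ "\<lambda>k. gg u"])
qed

lemma gg_sep: assumes "u \<in> RR" "v \<in> RR" "u \<noteq> v" shows "2 \<le> bv_norm (\<lambda>x. gg u x - gg v x)"
proof -
  define C where "C w = (if w = u then 1 else - 1 :: real)" for w
  have fin: "finite {u, v}" "{u, v} \<subseteq> RR" using assms by auto
  have "(\<Sum>w\<in>{u, v}. \<bar>C w\<bar>) \<le> TV01 (\<lambda>x. hsum {u, v} C x - 0)"
    by (rule key_ineq[OF fin bv_zero(1)]) simp
  moreover have "(\<Sum>w\<in>{u, v}. \<bar>C w\<bar>) = 2" using assms unfolding C_def by simp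
  moreover have "(\<lambda>x. hsum {u, v} C x - 0) = (\<lambda>x. gg u x - gg v x)"
    using assms unfolding C_def by (auto simp: hsum_def fun_eq_iff)
  ultimately show ?thesis using TV_le_norm[of "\<lambda>x. gg u x - gg v x"] by simp
qed

lemma RR_uncountable: "uncountable RR"
proof
  assume c: "countable RR"
  have "UNIV \<subseteq> (\<Union>u\<in>RR. (\<lambda>q. u + q) ` \<rat>)"
  proof
    fix x :: real
    have "x - rep x \<in> \<rat>" using rep_rel[of x] Rats_minus_iff[of "rep x - x"] by simp
    then show "x \<in> (\<Union>u\<in>RR. (\<lambda>q. u + q) ` \<rat>)" using rep_in_RR[of x]
      by (auto intro!: bexI[of _ "rep x"] image_eqI[of _ _ "x - rep x"])
  qed
  moreover have "countable (\<Union>u\<in>RR. (\<lambda>q. u + q) ` \<rat>)"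
    using c by (intro countable_UN countable_image countable_rat) auto
  ultimately have "countable (UNIV :: real set)" by (rule countable_subset)
  then show False using uncountable_UNIV_real by simp
qed

lemma SS_nonsep: "\<not> bv_separable SS"
proof
  assume "bv_separable SS"
  then obtain D where D: "countable D" "D \<subseteq> SS" "\<And>f e. f \<in> SS \<Longrightarrow> e > 0 \<Longrightarrow> \<exists>d\<in>D. bv_norm (\<lambda>x. f x - d x) < e"
    unfolding bv_separable_def by blast
  have "\<forall>u\<in>RR. \<exists>d\<in>D. bv_norm (\<lambda>x. gg u x - d x) < 1" using D(3) gg_SS by auto
  then obtain d where d: "\<And>u. u \<in> RR \<Longrightarrow> d u \<in> D" "\<And>u. u \<in> RR \<Longrightarrow> bv_norm (\<lambda>x. gg u x - d u x) < 1"
    by metis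
  have "\<not> inj_on d RR"
  proof
    assume "inj_on d RR"
    moreover have "countable (d ` RR)" using D(1) d(1) by (auto intro: countable_subset)
    ultimately have "countable RR" using countable_image_inj_on by blast
    then show False using RR_uncountable by simp
  qed
  then obtain u v where uv: "u \<in> RR" "v \<in> RR" "u \<noteq> v" "d u = d v" unfolding inj_on_def by blast
  have bvd: "bounded_var01 (d u)" using d(1)[OF uv(1)] D(2) unfolding SS_def by (auto intro: BV01_bv)
  have "bv_norm (\<lambda>x. gg u x - gg v x) \<le> bv_norm (\<lambda>x. gg u x - d u x) + bv_norm (\<lambda>x. d u x - gg v x)"
    by (rule norm_tri[OF gg_BV(2) bvd gg_BV(2)])
  also have "bv_norm (\<lambda>x. d u x - gg v x) = bv_norm (\<lambda>x. gg v x - d v x)"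
    using norm_sym[OF bvd gg_BV(2)] uv(4) by simp
  finally have "bv_norm (\<lambda>x. gg u x - gg v x) < 2" using d(2)[OF uv(1)] d(2)[OF uv(2)] by linarith
  then show False using gg_sep[OF uv(1-3)] by simp
qed

theorem mainTheorem6:
  shows "\<exists>S. bv_linear_subspace S \<and> bv_closed S \<and> \<not> bv_separable S
             \<and> S \<subseteq> Fcal \<union> {\<lambda>_. 0}"
proof (intro exI conjI)
  show "bv_linear_subspace SS" by (rule SS_linear)
  show "bv_closed SS" by (rule SS_closed)
  show "\<not> bv_separable SS" by (rule SS_nonsep)
  show "SS \<subseteq> Fcal \<union> {\<lambda>_. 0}" using SS_Fcal by blast
qed

end
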